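(* Assume the continuum hypothesis, fix a well-ordering $\lessdot$ of $[0,1]$ of order type $\omega_1$, and let $\mathcal{X}=[0,1]$, $\mathcal{H}=\{x\mapsto\mathbf 1_{x\,\underline{\lessdot}\,z}:z\in[0,1]\}$ (where $x\,\underline{\lessdot}\,z$ means $x\lessdot z$ or $x=z$). Then the ordinal Littlestone dimension satisfies $\mathrm{LD}(\mathcal{H})\ge\omega_1$ (i.e. either $\mathrm{LD}(\mathcal{H})=\mathsf\Omega$ or $\mathrm{LD}(\mathcal{H})$ is an ordinal $\ge\omega_1$).
   Context: A (finite) Littlestone tree of depth $d<\infty$ for $\mathcal{H}$ is a collection $\{x_{\mathbf u}:0\le k<d,\ \mathbf u\in\{0,1\}^k\}\subseteq\mathcal{X}$ such that for every $\mathbf y\in\{0,1\}^d$ there is $h\in\mathcal{H}$ with $h(x_{\mathbf y_{\le k}})=y_{k+1}$ for $0\le k<d$, where $\mathbf y_{\le k}=(y_1,\ldots,y_k)$; the empty tree $\varnothing$ has depth $0$. An infinite Littlestone tree is the analogous collection with $d=\infty$ (every finite initial path realized by some $h\in\mathcal{H}$). For finite Littlestone trees write $\mathbf t'\prec\mathbf t$ if $\mathbf t$ is obtained from $\mathbf t'$ by removing its leaves (deepest level). If $\mathcal{H}$ has no infinite Littlestone tree, $\prec$ is well-founded and its rank is defined by transfinite recursion: $\mathrm{rank}(\mathbf t)=0$ if no $\mathbf t'\prec\mathbf t$ exists, else $\mathrm{rank}(\mathbf t)=\sup\{\mathrm{rank}(\mathbf t')+1:\mathbf t'\prec\mathbf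 t\}$. The ordinal Littlestone dimension is $\mathrm{LD}(\mathcal{H})=-1$ if $\mathcal{H}=\varnothing$; $\mathrm{LD}(\mathcal{H})=\mathsf\Omega$ (a symbol larger than every ordinal) if $\mathcal{H}$ has an infinite Littlestone tree; and $\mathrm{LD}(\mathcal{H})=\mathrm{rank}(\varnothing)$ otherwise. $\omega_1$ is the first uncountable ordinal. *)

theory Defs
  imports Complex_Main
begin

text \<open>Finite Littlestone trees are encoded as partial maps from finite 0/1 strings
  (bool lists) to points; a tree of depth d has domain exactly the strings of length < d.
  Labels y_{k+1} correspond to y ! k (0-indexed).\<close>

definition LTree :: "'x set \<Rightarrow> ('x \<Rightarrow> bool) set \<Rightarrow> nat \<Rightarrow> (bool list \<Rightarrow> 'x option) \<Rightarrow> bool" where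
  "LTree X H d T \<longleftrightarrow> dom T = {u. length u < d} \<and> ran T \<subseteq> X \<and>
     (\<forall>y::bool list. length y = d \<longrightarrow>
        (\<exists>h\<in>H. \<forall>k<d. h (the (T (take k y))) = y ! k))"

definition finite_LTree :: "'x set \<Rightarrow> ('x \<Rightarrow> bool) set \<Rightarrow> (bool list \<Rightarrow> 'x option) \<Rightarrow> bool" where
  "finite_LTree X H T \<longleftrightarrow> (\<exists>d. LTree X H d T)"

definition LT_prec :: "'x set \<Rightarrow> ('x \<Rightarrow> bool) set \<Rightarrow> (bool list \<Rightarrow> 'x option) \<Rightarrow> (bool list \<Rightarrow> 'x option) \<Rightarrow> bool" where
  "LT_prec X H T' T \<longleftrightarrow> (\<exists>d. LTree X H d T \<and> LTree X H (Suc d) T' \<and> T = T' |` {u. length u < d})"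

definition infinite_LTree :: "'x set \<Rightarrow> ('x \<Rightarrow> bool) set \<Rightarrow> (bool list \<Rightarrow> 'x) \<Rightarrow> bool" where
  "infinite_LTree X H T \<longleftrightarrow> range T \<subseteq> X \<and>
     (\<forall>y::bool list. \<exists>h\<in>H. \<forall>k<length y. h (T (take k y)) = y ! k)"

definition has_infinite_LTree :: "'x set \<Rightarrow> ('x \<Rightarrow> bool) set \<Rightarrow> bool" where
  "has_infinite_LTree X H \<longleftrightarrow> (\<exists>T. infinite_LTree X H T)"

text \<open>Ordinals are represented by well-orders. rho is a rank function for \<prec> with values
  in the well-order W: rank(T) is the least element of W strictly above all rank(T'), T' \<prec> T,
  i.e. rank(T) = sup { rank(T') + 1 : T' \<prec> T }.\<close>
definition is_rank_function :: "'x set \<Rightarrow> ('x \<Rightarrow> bool) set \<Rightarrow> 'o rel \<Rightarrow> ((bool list \<Rightarrow> 'x option) \<Rightarrow> 'o) \<Rightarrow> bool" where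
  "is_rank_function X H W \<rho> \<longleftrightarrow> Well_order W \<and>
     (\<forall>T. finite_LTree X H T \<longrightarrow>
        \<rho> T \<in> Field W \<and>
        (\<forall>T'. LT_prec X H T' T \<longrightarrow> (\<rho> T', \<rho> T) \<in> W \<and> \<rho> T' \<noteq> \<rho> T) \<and>
        (\<forall>a\<in>Field W. (\<forall>T'. LT_prec X H T' T \<longrightarrow> (\<rho> T', a) \<in> W \<and> \<rho> T' \<noteq> a)
              \<longrightarrow> (\<rho> T, a) \<in> W))"

end

theory Submission
  imports Defs "HOL-Library.Countable_Set_Type" "HOL-Analysis.Continuum_Not_Denumerable"
begin
unbundle cardinal_syntax


locale LDL =
  fixes L :: "real rel"
  assumes wo: "well_order_on {0..1} L"
    and ot: "(L, cardSuc natLeq) \<in> ordIso"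
begin

abbreviation "AA \<equiv> {0..1::real}"

lemma fld: "Field L = AA" using well_order_on_Field[OF wo] by simp
lemma WO: "Well_order L" using wo fld by simp

lemma refl: "z \<in> AA \<Longrightarrow> (z,z) \<in> L"
  using wo unfolding well_order_on_def linear_order_on_def partial_order_on_def preorder_on_def refl_on_def by blast
lemma sub: "(a,b) \<in> L \<Longrightarrow> a \<in> AA \<and> b \<in> AA"
  using fld unfolding Field_def by blast
lemma antisym: "(a,b) \<in> L \<Longrightarrow> (b,a) \<in> L \<Longrightarrow> a = b"
  using wo unfolding well_order_on_def linear_order_on_def partial_order_on_def antisym_def by blast
lemma trans: "(a,b) \<in> L \<Longrightarrow> (b,c) \<in> L \<Longrightarrow> (a,c) \<in> L"
  using wo unfolding well_order_on_def linear_order_on_def partial_order_on_def preorder_on_def trans_def by blast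
lemma total: "a \<in> AA \<Longrightarrow> b \<in> AA \<Longrightarrow> (a,b) \<in> L \<or> (b,a) \<in> L"
  using wo refl[of a] unfolding well_order_on_def linear_order_on_def total_on_def by (cases "a = b") auto
lemma wfL: "wf (L - Id)" using wo unfolding well_order_on_def by blast

lemma F2: "uncountable AA" using uncountable_closed_interval[of 0 1] by simp

lemma F1: assumes "w \<in> AA" shows "countable {z. (z,w) \<in> L}"
proof -
  let ?U = "underS L w"
  have ne: "Field L \<noteq> {}" using fld by auto
  have lt: "Restr L ?U <o L" using underS_Restr_ordLess[OF WO ne] .
  have fU: "Field (Restr L ?U) = ?U"
  proof
    show "Field (Restr L ?U) \<subseteq> ?U" by (rule Field_Restr_subset)
    show "?U \<subseteq> Field (Restr L ?U)"
    proof
      fix z assume "z \<in> ?U"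
      then have "z \<in> AA" using sub unfolding underS_def by blast
      then have "(z,z) \<in> Restr L ?U" using refl \<open>z \<in> ?U\<close> by blast
      then show "z \<in> Field (Restr L ?U)" unfolding Field_def by blast
    qed
  qed
  have "Well_order (Restr L ?U)" using Well_order_Restr[OF WO] .
  then have "well_order_on ?U (Restr L ?U)" using fU by simp
  then have "|?U| \<le>o Restr L ?U" by (rule card_of_least)
  also note lt
  also note ot
  finally have "|?U| <o cardSuc natLeq" .
  then have "|?U| \<le>o natLeq"
    using cardSuc_ordLeq_ordLess[OF natLeq_Card_order card_of_Card_order] by blast
  then have "countable ?U" using countable_card_le_natLeq by blast
  moreover have "{z. (z,w) \<in> L} = insert w ?U" using refl assms unfolding underS_def by blast
  ultimately show ?thesis by simp
qed

lemma F3: assumes "countable C" "C \<subseteq> AA" shows "\<exists>b\<in>AA. \<forall>c\<in>C. (c,b) \<in> L \<and> c \<noteq> b"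
proof (rule ccontr)
  assume "\<not> ?thesis"
  then have "\<forall>b\<in>AA. \<exists>c\<in>C. (b,c) \<in> L"
    using total assms(2) refl by blast
  then have "AA \<subseteq> (\<Union>c\<in>C. {z. (z,c) \<in> L})" by blast
  moreover have "countable (\<Union>c\<in>C. {z. (z,c) \<in> L})"
    using assms F1 by blast
  ultimately show False using F2 countable_subset by blast
qed

lemma fR: assumes "S \<subseteq> AA" shows "Field (Restr L S) = S"
proof
  show "Field (Restr L S) \<subseteq> S" by (rule Field_Restr_subset)
  show "S \<subseteq> Field (Restr L S)"
  proof
    fix z assume "z \<in> S"
    then have "(z,z) \<in> Restr L S" using refl assms by blast
    then show "z \<in> Field (Restr L S)" unfolding Field_def by blast
  qed
qed

lemma E: assumes "x \<in> AA" "a \<in> AA"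
  shows "\<exists>e b. b \<in> AA \<and> (\<forall>z\<in>underS L x. e z \<in> AA \<and> (a, e z) \<in> L \<and> (e z, b) \<in> L \<and> e z \<noteq> b)
     \<and> (\<forall>z\<in>underS L x. \<forall>w\<in>underS L x. (z,w) \<in> L \<longrightarrow> (e z, e w) \<in> L) \<and> inj_on e (underS L x)"
proof -
  let ?U = "underS L x" let ?T = "{z. (a,z) \<in> L}"
  have UA: "?U \<subseteq> AA" using sub unfolding underS_def by blast
  have TA: "?T \<subseteq> AA" using sub by blast
  have cU: "countable ?U" using F1[OF assms(1)] by (rule countable_subset[rotated]) (auto simp: underS_def)
  have w1: "Well_order (Restr L ?U)" "Well_order (Restr L ?T)" using Well_order_Restr[OF WO] by auto
  have f1: "Field (Restr L ?U) = ?U" "Field (Restr L ?T) = ?T" using fR UA TA by auto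
  have "Restr L ?U \<le>o Restr L ?T \<or> Restr L ?T \<le>o Restr L ?U" using ordLeq_total w1 by blast
  moreover have "\<not> Restr L ?T \<le>o Restr L ?U"
  proof
    assume "Restr L ?T \<le>o Restr L ?U"
    then obtain f where f: "embed (Restr L ?T) (Restr L ?U) f" unfolding ordLeq_def by blast
    have "inj_on f ?T" using embed_inj_on[OF w1(2) f] f1 by simp
    moreover have "f ` ?T \<subseteq> ?U" using embed_Field[OF f] f1 by simp
    ultimately have "countable ?T" using cU countable_image_inj_on countable_subset by metis
    moreover have "AA \<subseteq> {z. (z,a) \<in> L} \<union> ?T" using total assms(2) by blast
    ultimately show False using F1[OF assms(2)] F2 countable_subset by (metis countable_Un)
  qed
  ultimately have "Restr L ?U \<le>o Restr L ?T" by blast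
  then obtain f where f: "embed (Restr L ?U) (Restr L ?T) f" unfolding ordLeq_def by blast
  have inj: "inj_on f ?U" using embed_inj_on[OF w1(1) f] f1 by simp
  have img: "f ` ?U \<subseteq> ?T" using embed_Field[OF f] f1 by simp
  have cmp: "\<forall>z\<in>?U. \<forall>w\<in>?U. (z,w) \<in> L \<longrightarrow> (f z, f w) \<in> L"
    using embed_compat[OF f] unfolding compat_def by blast
  have cI: "countable (f ` ?U)" using cU by simp
  have sI: "f ` ?U \<subseteq> AA" using img TA by blast
  obtain b where b: "b \<in> AA" "\<forall>c\<in>f ` ?U. (c,b) \<in> L \<and> c \<noteq> b" using F3[OF cI sI] by blast
  have P1: "\<forall>z\<in>?U. f z \<in> AA \<and> (a, f z) \<in> L \<and> (f z, b) \<in> L \<and> f z \<noteq> b"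
  proof
    fix z assume z: "z \<in> ?U"
    then have "f z \<in> ?T" using img by blast
    then show "f z \<in> AA \<and> (a, f z) \<in> L \<and> (f z, b) \<in> L \<and> f z \<noteq> b" using b z sub by blast
  qed
  show ?thesis using P1 cmp inj b(1) by blast
qed

lemma no_inf: "\<not> (\<exists>T. range T \<subseteq> AA \<and> (\<forall>y::bool list. \<exists>z\<in>AA. \<forall>k<length y. ((T (take k y), z) \<in> L) = y ! k))"
proof
  assume "\<exists>T. range T \<subseteq> AA \<and> (\<forall>y::bool list. \<exists>z\<in>AA. \<forall>k<length y. ((T (take k y), z) \<in> L) = y ! k)"
  then obtain T where Tr: "range T \<subseteq> AA" and T: "\<forall>y::bool list. \<exists>z\<in>AA. \<forall>k<length y. ((T (take k y), z) \<in> L) = y ! k" by blast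
  define f where "f n = T (replicate n False)" for n
  have "(f (Suc n), f n) \<in> L - Id" for n
  proof -
    let ?y = "replicate n False @ [False, True]"
    obtain z where z: "z \<in> AA" "\<forall>k<length ?y. ((T (take k ?y), z) \<in> L) = ?y ! k" using T by blast
    have a: "take n ?y = replicate n False" by simp
    have b: "take (Suc n) ?y = replicate (Suc n) False"
      by (simp add: take_append replicate_append_same[symmetric])
    have "((T (take n ?y), z) \<in> L) = ?y ! n" using z(2)[rule_format, of n] by simp
    then have 1: "(f n, z) \<notin> L" unfolding a by (simp add: f_def nth_append)
    have "((T (take (Suc n) ?y), z) \<in> L) = ?y ! Suc n" using z(2)[rule_format, of "Suc n"] by simp
    then have 2: "(f (Suc n), z) \<in> L" unfolding b by (simp add: f_def nth_append)
    have fA: "f n \<in> AA" unfolding f_def using Tr by blast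
    have "(z, f n) \<in> L" using total[OF z(1) fA] 1 by blast
    then have "(f (Suc n), f n) \<in> L" using 2 trans by blast
    moreover have "f (Suc n) \<noteq> f n" using 1 2 by auto
    ultimately show ?thesis by simp
  qed
  then have "\<exists>f. \<forall>n. (f (Suc n), f n) \<in> L - Id" by blast
  then show False using wfL unfolding wf_iff_no_infinite_down_chain by blast
qed

definition VS :: "(bool list \<Rightarrow> real option) \<Rightarrow> nat \<Rightarrow> bool list \<Rightarrow> real set" where
  "VS T d y = {z \<in> AA. \<forall>k<d. ((the (T (take k y)), z) \<in> L) = y ! k}"

abbreviation "HH \<equiv> {(\<lambda>x. (x, z) \<in> L) | z. z \<in> {0..1::real}}"

lemma LTree_iff: "LTree AA HH d T \<longleftrightarrow> dom T = {u. length u < d} \<and> ran T \<subseteq> AA \<and>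
   (\<forall>y. length y = d \<longrightarrow> VS T d y \<noteq> {})"
proof -
  have "(\<exists>h\<in>HH. \<forall>k<d. h (the (T (take k y))) = y ! k) \<longleftrightarrow> VS T d y \<noteq> {}" for y
  proof
    assume "\<exists>h\<in>HH. \<forall>k<d. h (the (T (take k y))) = y ! k"
    then obtain z where "z \<in> AA" "\<forall>k<d. ((the (T (take k y)), z) \<in> L) = y ! k" by auto
    then have "z \<in> VS T d y" unfolding VS_def by blast
    then show "VS T d y \<noteq> {}" by blast
  next
    assume "VS T d y \<noteq> {}"
    then obtain z where "z \<in> AA" "\<forall>k<d. ((the (T (take k y)), z) \<in> L) = y ! k" unfolding VS_def by blast
    then show "\<exists>h\<in>HH. \<forall>k<d. h (the (T (take k y))) = y ! k" by (intro bexI[of _ "\<lambda>x. (x, z) \<in> L"]) auto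
  qed
  then show ?thesis unfolding LTree_def by simp
qed

definition DOM :: "real set \<Rightarrow> real set \<Rightarrow> bool" where
  "DOM V V2 \<longleftrightarrow> (\<exists>e. (\<forall>z\<in>V. e z \<in> V2) \<and> (\<forall>z\<in>V. \<forall>w\<in>V. (z,w) \<in> L \<longrightarrow> (e z, e w) \<in> L) \<and> inj_on e V)"

definition Sim where
  "Sim T d T2 d2 \<longleftrightarrow> (\<forall>y2. length y2 = d2 \<longrightarrow> (\<exists>y. length y = d \<and> DOM (VS T d y) (VS T2 d2 y2)))"

lemma VS_ext: assumes "T = T' |` {u. length u < d}" "length y = d"
  shows "VS T' (Suc d) (y @ [b]) = {z \<in> VS T d y. ((the (T' y), z) \<in> L) = b}"
proof -
  have 1: "T (take k y) = T' (take k (y @ [b]))" if "k < d" for k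
    using that assms by (simp add: restrict_map_def)
  have 2: "(y @ [b]) ! k = y ! k" if "k < d" for k using that assms by (simp add: nth_append)
  have 3: "take d (y @ [b]) = y" "(y @ [b]) ! d = b" using assms by auto
  show ?thesis unfolding VS_def using 1 2 3 assms(2) by (auto simp: less_Suc_eq)
qed

lemma minL: assumes "S \<subseteq> AA" "S \<noteq> {}" shows "\<exists>m\<in>S. \<forall>s\<in>S. (m,s) \<in> L"
proof -
  obtain m where m: "m \<in> S" "\<And>s. (s,m) \<in> L - Id \<Longrightarrow> s \<notin> S" using wfE_min[OF wfL] assms(2) by blast
  have "(m,s) \<in> L" if "s \<in> S" for s
    using total[of m s] m that assms(1) refl by blast
  then show ?thesis using m(1) by blast
qed

lemma DOM_ne: "DOM V V2 \<Longrightarrow> V \<noteq> {} \<Longrightarrow> V2 \<noteq> {}" unfolding DOM_def by blast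

lemma VS_sub: "VS T d y \<subseteq> AA" unfolding VS_def by blast

lemma ext_lemma:
  assumes T: "LTree AA HH d T" and T': "LTree AA HH (Suc d) T'" and TT': "T = T' |` {u. length u < d}"
    and T2: "LTree AA HH d2 T2" and S: "Sim T d T2 d2"
  shows "\<exists>T2'. LTree AA HH (Suc d2) T2' \<and> T2 = T2' |` {u. length u < d2} \<and> Sim T' (Suc d) T2' (Suc d2)"
proof -
  have "\<forall>y2. \<exists>ye. length y2 = d2 \<longrightarrow> length (fst ye) = d \<and> (\<forall>z\<in>VS T d (fst ye). snd ye z \<in> VS T2 d2 y2) \<and>
      (\<forall>z\<in>VS T d (fst ye). \<forall>w\<in>VS T d (fst ye). (z,w) \<in> L \<longrightarrow> (snd ye z, snd ye w) \<in> L) \<and> inj_on (snd ye) (VS T d (fst ye))"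
  proof
    fix y2 :: "bool list"
    show "\<exists>ye. length y2 = d2 \<longrightarrow> length (fst ye) = d \<and> (\<forall>z\<in>VS T d (fst ye). snd ye z \<in> VS T2 d2 y2) \<and>
      (\<forall>z\<in>VS T d (fst ye). \<forall>w\<in>VS T d (fst ye). (z,w) \<in> L \<longrightarrow> (snd ye z, snd ye w) \<in> L) \<and> inj_on (snd ye) (VS T d (fst ye))"
    proof (cases "length y2 = d2")
      case True
      then obtain y e where "length y = d" "\<forall>z\<in>VS T d y. e z \<in> VS T2 d2 y2"
        "\<forall>z\<in>VS T d y. \<forall>w\<in>VS T d y. (z,w) \<in> L \<longrightarrow> (e z, e w) \<in> L" "inj_on e (VS T d y)"
        using S unfolding Sim_def DOM_def by blast
      then show ?thesis by (intro exI[of _ "(y,e)"]) simp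
    qed simp
  qed
  from choice[OF this] obtain YE where YE0: "\<forall>y2. length y2 = d2 \<longrightarrow> length (fst (YE y2)) = d \<and> (\<forall>z\<in>VS T d (fst (YE y2)). snd (YE y2) z \<in> VS T2 d2 y2) \<and>
      (\<forall>z\<in>VS T d (fst (YE y2)). \<forall>w\<in>VS T d (fst (YE y2)). (z,w) \<in> L \<longrightarrow> (snd (YE y2) z, snd (YE y2) w) \<in> L) \<and> inj_on (snd (YE y2)) (VS T d (fst (YE y2)))"
    by blast
  note YE = YE0[rule_format]
  define Y where "Y y2 = fst (YE y2)" for y2
  define Ef where "Ef y2 = snd (YE y2)" for y2
  have Y: "length (Y y2) = d" "\<And>z. z \<in> VS T d (Y y2) \<Longrightarrow> Ef y2 z \<in> VS T2 d2 y2"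
    "\<And>z w. z \<in> VS T d (Y y2) \<Longrightarrow> w \<in> VS T d (Y y2) \<Longrightarrow> (z,w) \<in> L \<Longrightarrow> (Ef y2 z, Ef y2 w) \<in> L"
    "inj_on (Ef y2) (VS T d (Y y2))" if "length y2 = d2" for y2
    using YE[OF that] unfolding Y_def Ef_def by auto
  define p where "p y2 = the (T' (Y y2))" for y2
  define Sm where "Sm y2 = {z \<in> VS T d (Y y2). (p y2, z) \<in> L}" for y2
  define m where "m y2 = (SOME m. m \<in> Sm y2 \<and> (\<forall>s\<in>Sm y2. (m,s) \<in> L))" for y2
  define q where "q y2 = Ef y2 (m y2)" for y2
  define T2' where "T2' u = (if length u = d2 then Some (q u) else T2 u)" for u
  have domT': "dom T' = {u. length u < Suc d}" and ranT': "ran T' \<subseteq> AA"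
    and neT': "\<And>y. length y = Suc d \<Longrightarrow> VS T' (Suc d) y \<noteq> {}" using T' unfolding LTree_iff by auto
  have domT2: "dom T2 = {u. length u < d2}" and ranT2: "ran T2 \<subseteq> AA" using T2 unfolding LTree_iff by auto
  have pA: "p y2 \<in> AA" if "length y2 = d2" for y2
  proof -
    have "Y y2 \<in> dom T'" using domT' Y(1)[OF that] by simp
    then obtain v where "T' (Y y2) = Some v" by blast
    then show ?thesis using ranT' unfolding p_def ran_def by auto
  qed
  have Sm_eq: "Sm y2 = VS T' (Suc d) (Y y2 @ [True])" if "length y2 = d2" for y2
    using VS_ext[OF TT' Y(1)[OF that]] unfolding Sm_def p_def by simp
  have m: "m y2 \<in> Sm y2 \<and> (\<forall>s\<in>Sm y2. (m y2, s) \<in> L)" if "length y2 = d2" for y2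
  proof -
    have "Sm y2 \<noteq> {}" using Sm_eq[OF that] neT' Y(1)[OF that] by simp
    moreover have "Sm y2 \<subseteq> AA" unfolding Sm_def using VS_sub by blast
    ultimately have "\<exists>m. m \<in> Sm y2 \<and> (\<forall>s\<in>Sm y2. (m,s) \<in> L)" using minL by blast
    then show ?thesis unfolding m_def by (rule someI_ex)
  qed
  have key: "((p y2, z) \<in> L) = ((q y2, Ef y2 z) \<in> L)" if y2: "length y2 = d2" and z: "z \<in> VS T d (Y y2)" for y2 z
  proof
    assume "(p y2, z) \<in> L"
    then have "z \<in> Sm y2" using z unfolding Sm_def by blast
    then have "(m y2, z) \<in> L" using m[OF y2] by blast
    moreover have "m y2 \<in> VS T d (Y y2)" using m[OF y2] unfolding Sm_def by blast
    ultimately show "(q y2, Ef y2 z) \<in> L" unfolding q_def using Y(3)[OF y2] z by blast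
  next
    assume a: "(q y2, Ef y2 z) \<in> L"
    show "(p y2, z) \<in> L"
    proof (rule ccontr)
      assume np: "(p y2, z) \<notin> L"
      have zA: "z \<in> AA" using z VS_sub by blast
      have "(z, p y2) \<in> L" using total[OF zA pA[OF y2]] np by blast
      moreover have pm: "(p y2, m y2) \<in> L" and mV: "m y2 \<in> VS T d (Y y2)" using m[OF y2] unfolding Sm_def by auto
      ultimately have zm: "(z, m y2) \<in> L" using trans by blast
      have "z \<noteq> m y2" using np pm by auto
      moreover have "(Ef y2 z, q y2) \<in> L" unfolding q_def using Y(3)[OF y2 z mV zm] .
      ultimately have "Ef y2 z = q y2" using antisym a by blast
      then have "z = m y2" using Y(4)[OF y2] z mV unfolding q_def inj_on_def by blast
      then show False using \<open>z \<noteq> m y2\<close> by blast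
    qed
  qed
  have TT2: "T2 = T2' |` {u. length u < d2}"
  proof (rule ext)
    fix u show "T2 u = (T2' |` {u. length u < d2}) u"
    proof (cases "length u < d2")
      case True then show ?thesis by (simp add: T2'_def restrict_map_def)
    next
      case False then have "u \<notin> dom T2" using domT2 by simp
      then show ?thesis using False by (auto simp: restrict_map_def)
    qed
  qed
  have T2'y: "the (T2' y2) = q y2" if "length y2 = d2" for y2 using that by (simp add: T2'_def)
  have VS2: "VS T2' (Suc d2) (y2 @ [b]) = {z \<in> VS T2 d2 y2. ((q y2, z) \<in> L) = b}" if "length y2 = d2" for y2 b
    using VS_ext[OF TT2 that] T2'y[OF that] by simp
  have VS1: "VS T' (Suc d) (Y y2 @ [b]) = {z \<in> VS T d (Y y2). ((p y2, z) \<in> L) = b}" if "length y2 = d2" for y2 b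
    using VS_ext[OF TT' Y(1)[OF that]] unfolding p_def by simp
  have SimD: "length (Y y2 @ [b]) = Suc d \<and> DOM (VS T' (Suc d) (Y y2 @ [b])) (VS T2' (Suc d2) (y2 @ [b]))"
    if y2: "length y2 = d2" for y2 b
  proof -
    have "DOM (VS T' (Suc d) (Y y2 @ [b])) (VS T2' (Suc d2) (y2 @ [b]))"
      unfolding DOM_def
    proof (intro exI[of _ "Ef y2"] conjI ballI impI)
      fix z assume "z \<in> VS T' (Suc d) (Y y2 @ [b])"
      then have z: "z \<in> VS T d (Y y2)" "((p y2, z) \<in> L) = b" using VS1[OF y2] by auto
      then show "Ef y2 z \<in> VS T2' (Suc d2) (y2 @ [b])" using VS2[OF y2] Y(2)[OF y2] key[OF y2] by auto
    next
      fix z w assume "z \<in> VS T' (Suc d) (Y y2 @ [b])" "w \<in> VS T' (Suc d) (Y y2 @ [b])" "(z,w) \<in> L"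
      then show "(Ef y2 z, Ef y2 w) \<in> L" using VS1[OF y2] Y(3)[OF y2] by auto
    next
      show "inj_on (Ef y2) (VS T' (Suc d) (Y y2 @ [b]))"
        by (rule inj_on_subset[OF Y(4)[OF y2]]) (auto simp: VS1[OF y2])
    qed
    then show ?thesis using Y(1)[OF y2] by simp
  qed
  have split: "\<exists>y2 b. y = y2 @ [b] \<and> length y2 = d2" if "length y = Suc d2" for y :: "bool list"
    using that by (metis append_butlast_last_id diff_Suc_1 length_0_conv length_butlast nat.distinct(1))
  have Sim': "Sim T' (Suc d) T2' (Suc d2)"
    unfolding Sim_def using SimD split by blast
  have L2: "LTree AA HH (Suc d2) T2'"
    unfolding LTree_iff
  proof (intro conjI allI impI)
    show "dom T2' = {u. length u < Suc d2}"
    proof -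
      have "(T2' u \<noteq> None) = (length u < Suc d2)" for u
      proof (cases "length u = d2")
        case True then show ?thesis by (simp add: T2'_def)
      next
        case False
        have "(T2 u \<noteq> None) = (length u < d2)" using domT2 by (auto simp: dom_def)
        then show ?thesis using False by (auto simp: T2'_def)
      qed
      then show ?thesis unfolding dom_def by blast
    qed
    show "ran T2' \<subseteq> AA"
    proof
      fix v assume "v \<in> ran T2'"
      then obtain u where u: "T2' u = Some v" unfolding ran_def by blast
      show "v \<in> AA"
      proof (cases "length u = d2")
        case True
        then have "v = q u" using u by (simp add: T2'_def)
        moreover have "m u \<in> VS T d (Y u)" using m[OF True] unfolding Sm_def by blast
        ultimately show ?thesis using Y(2)[OF True] VS_sub unfolding q_def by blast
      next
        case False
        then have "T2 u = Some v" using u by (simp add: T2'_def)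
        then show ?thesis using ranT2 unfolding ran_def by blast
      qed
    qed
    fix y :: "bool list" assume "length y = Suc d2"
    then obtain y2 b where y: "y = y2 @ [b]" "length y2 = d2" using split by blast
    have "VS T' (Suc d) (Y y2 @ [b]) \<noteq> {}" using neT' Y(1)[OF y(2)] by simp
    then show "VS T2' (Suc d2) y \<noteq> {}" using SimD[OF y(2)] DOM_ne y(1) by blast
  qed
  show ?thesis using L2 TT2 Sim' by blast
qed

end



lemma dep_uniq: "LTree X H d T \<Longrightarrow> LTree X H d' T \<Longrightarrow> d = d'"
proof -
  assume a: "LTree X H d T" "LTree X H d' T"
  then have e: "{u::bool list. length u < d} = {u. length u < d'}" unfolding LTree_def by auto
  have "\<forall>k. (k < d) = (k < d')"
  proof
    fix k
    have "(replicate k False \<in> {u::bool list. length u < d}) = (replicate k False \<in> {u. length u < d'})" using e by simp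
    then show "(k < d) = (k < d')" by simp
  qed
  then show ?thesis by (metis less_irrefl nat_neq_iff)
qed

context LDL begin

lemma W_props: assumes "Well_order W"
  shows "wf (W - Id)" "\<And>a b c. (a,b) \<in> W \<Longrightarrow> (b,c) \<in> W \<Longrightarrow> (a,c) \<in> W"
    "\<And>a b. (a,b) \<in> W \<Longrightarrow> (b,a) \<in> W \<Longrightarrow> a = b"
    "\<And>a. a \<in> Field W \<Longrightarrow> (a,a) \<in> W"
  using assms unfolding well_order_on_def linear_order_on_def partial_order_on_def preorder_on_def
    trans_def antisym_def refl_on_def by blast+

lemma rank_mono:
  assumes RF: "is_rank_function AA HH W \<rho>"
  shows "LTree AA HH d T \<Longrightarrow> LTree AA HH d2 T2 \<Longrightarrow> Sim T d T2 d2 \<Longrightarrow> (\<rho> T, \<rho> T2) \<in> W"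
proof -
  have WO: "Well_order W" using RF unfolding is_rank_function_def by blast
  note WP = W_props[OF WO]
  have RF2: "\<And>T T'. finite_LTree AA HH T \<Longrightarrow> LT_prec AA HH T' T \<Longrightarrow> (\<rho> T', \<rho> T) \<in> W \<and> \<rho> T' \<noteq> \<rho> T"
    and RF1: "\<And>T. finite_LTree AA HH T \<Longrightarrow> \<rho> T \<in> Field W"
    and RF3: "\<And>T a. finite_LTree AA HH T \<Longrightarrow> a \<in> Field W \<Longrightarrow> (\<forall>T'. LT_prec AA HH T' T \<longrightarrow> (\<rho> T', a) \<in> W \<and> \<rho> T' \<noteq> a) \<Longrightarrow> (\<rho> T, a) \<in> W"
    using RF unfolding is_rank_function_def by blast+
  have "\<forall>T T2 d d2. LTree AA HH d T \<longrightarrow> LTree AA HH d2 T2 \<longrightarrow> Sim T d T2 d2 \<longrightarrow> \<rho> T2 = a \<longrightarrow> (\<rho> T, a) \<in> W" for a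
  proof (induction a rule: wf_induct[OF WP(1)])
    case (1 a)
    show ?case
    proof (intro allI impI)
      fix T T2 d d2 assume LT: "LTree AA HH d T" and LT2: "LTree AA HH d2 T2" and S: "Sim T d T2 d2" and ra: "\<rho> T2 = a"
      have fT: "finite_LTree AA HH T" using LT unfolding finite_LTree_def by blast
      have fT2: "finite_LTree AA HH T2" using LT2 unfolding finite_LTree_def by blast
      have aF: "a \<in> Field W" using RF1[OF fT2] ra by simp
      have "\<forall>T'. LT_prec AA HH T' T \<longrightarrow> (\<rho> T', a) \<in> W \<and> \<rho> T' \<noteq> a"
      proof (intro allI impI)
        fix T' assume "LT_prec AA HH T' T"
        then obtain d' where d': "LTree AA HH d' T" "LTree AA HH (Suc d') T'" "T = T' |` {u. length u < d'}"
          unfolding LT_prec_def by blast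
        have "d' = d" using dep_uniq d'(1) LT by blast
        then obtain T2' where T2': "LTree AA HH (Suc d2) T2'" "T2 = T2' |` {u. length u < d2}" "Sim T' (Suc d) T2' (Suc d2)"
          using ext_lemma[OF LT _ _ LT2 S] d' by blast
        have "LT_prec AA HH T2' T2" unfolding LT_prec_def using T2'(1,2) LT2 by blast
        then have lt: "(\<rho> T2', \<rho> T2) \<in> W" "\<rho> T2' \<noteq> \<rho> T2" using RF2[OF fT2] by blast+
        then have "(\<rho> T2', a) \<in> W - Id" using ra by simp
        then have IH: "(\<rho> T', \<rho> T2') \<in> W"
          using 1[rule_format, of "\<rho> T2'" "Suc d" T' "Suc d2" T2'] d'(2) \<open>d' = d\<close> T2'(1,3) by blast
        have "(\<rho> T', a) \<in> W" using WP(2)[OF IH lt(1)] ra by simp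
        moreover have "\<rho> T' \<noteq> a"
        proof
          assume "\<rho> T' = a"
          then have "\<rho> T2' = \<rho> T2" using WP(3) IH lt(1) ra by metis
          then show False using lt(2) by blast
        qed
        ultimately show "(\<rho> T', a) \<in> W \<and> \<rho> T' \<noteq> a" by blast
      qed
      then show "(\<rho> T, a) \<in> W" using RF3[OF fT aF] by blast
    qed
  qed
  then show "LTree AA HH d T \<Longrightarrow> LTree AA HH d2 T2 \<Longrightarrow> Sim T d T2 d2 \<Longrightarrow> (\<rho> T, \<rho> T2) \<in> W" by blast
qed

end



context LDL begin

lemma DOM_I: "V \<subseteq> U \<Longrightarrow> (\<forall>z\<in>U. e z \<in> V2) \<Longrightarrow> (\<forall>z\<in>U. \<forall>w\<in>U. (z,w) \<in> L \<longrightarrow> (e z, e w) \<in> L) \<Longrightarrow> inj_on e U \<Longrightarrow> DOM V V2"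
  unfolding DOM_def by (intro exI[of _ e]) (auto intro: inj_on_subset)

lemma len1: "length (y::bool list) < 1 \<longleftrightarrow> y = []" by auto

lemma len2: "length (y::bool list) = 2 \<Longrightarrow> \<exists>c1 c2. y = [c1, c2]"
  by (auto simp: numeral_2_eq_2 length_Suc_conv)

lemma len1b: "length (y::bool list) = 1 \<Longrightarrow> \<exists>c. y = [c]"
  by (auto simp: length_Suc_conv)

definition Tx :: "real \<Rightarrow> bool list \<Rightarrow> real option" where
  "Tx x = (\<lambda>u. if u = [] then Some x else None)"

lemma VSx: "VS (Tx x) 1 [b] = {z \<in> AA. ((x,z) \<in> L) = b}"
  unfolding VS_def Tx_def by auto

lemma LT0: "LTree AA HH 0 Map.empty"
  unfolding LTree_iff VS_def by auto

lemma LTx: assumes "x \<in> AA" "\<forall>s\<in>AA. (\<mu>,s) \<in> L" "\<mu> \<in> AA" "x \<noteq> \<mu>"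
  shows "LTree AA HH 1 (Tx x)"
  unfolding LTree_iff
proof (intro conjI allI impI)
  show "dom (Tx x) = {u. length u < 1}" unfolding Tx_def len1 by (auto split: if_splits)
  show "ran (Tx x) \<subseteq> AA" unfolding Tx_def ran_def using assms(1) by (auto split: if_splits)
  fix y :: "bool list" assume "length y = 1"
  then obtain c where c: "y = [c]" using len1b by blast
  show "VS (Tx x) 1 y \<noteq> {}"
  proof (cases c)
    case True then show ?thesis using c VSx refl assms(1) by blast
  next
    case False
    have "(x, \<mu>) \<notin> L" using assms antisym by blast
    then show ?thesis using c VSx False assms(3) by blast
  qed
qed

lemma precE: assumes "LTree AA HH 1 (Tx x)" shows "LT_prec AA HH (Tx x) Map.empty"
  unfolding LT_prec_def using LT0 assms by (intro exI[of _ 0]) (auto simp: restrict_map_def)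

lemma big: assumes RF: "is_rank_function AA HH W \<rho>"
  shows "cardSuc natLeq \<le>o Restr W (underS W (\<rho> Map.empty))"
proof -
  have WO: "Well_order W" using RF unfolding is_rank_function_def by blast
  note WP = W_props[OF WO]
  have RF2: "\<And>T T'. finite_LTree AA HH T \<Longrightarrow> LT_prec AA HH T' T \<Longrightarrow> (\<rho> T', \<rho> T) \<in> W \<and> \<rho> T' \<noteq> \<rho> T"
    using RF unfolding is_rank_function_def by blast+
  let ?S = "underS W (\<rho> Map.empty)"
  obtain \<mu> where mu: "\<mu> \<in> AA" "\<forall>s\<in>AA. (\<mu>,s) \<in> L" using minL[of AA] by auto
  have fE: "finite_LTree AA HH Map.empty" using LT0 unfolding finite_LTree_def by blast
  have LTx': "LTree AA HH 1 (Tx x)" if "x \<in> AA - {\<mu>}" for x using LTx[of x \<mu>] mu that by blast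
  have inS: "\<rho> (Tx x) \<in> ?S" if "x \<in> AA - {\<mu>}" for x
    using RF2[OF fE precE[OF LTx'[OF that]]] unfolding underS_def by blast
  have unc: "uncountable ?S"
  proof
    assume cS: "countable ?S"
    let ?D = "AA - {\<mu>}"
    define Fib where "Fib v = {x \<in> ?D. \<rho> (Tx x) = v}" for v
    have uD: "uncountable ?D" using F2 uncountable_minus_countable[of AA "{\<mu>}"] by simp
    have "\<exists>v\<in>?S. uncountable (Fib v)"
    proof (rule ccontr)
      assume "\<not> ?thesis"
      then have "countable (\<Union>v\<in>?S. Fib v)" using cS by blast
      moreover have "?D \<subseteq> (\<Union>v\<in>?S. Fib v)" using inS unfolding Fib_def by blast
      ultimately show False using uD countable_subset by blast
    qed
    then obtain v where v: "uncountable (Fib v)" by blast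
    then obtain x where x: "x \<in> Fib v" by (metis countable_empty ex_in_conv)
    have xA: "x \<in> AA" "x \<noteq> \<mu>" using x unfolding Fib_def by auto
    have muU: "\<mu> \<in> underS L x" using mu xA unfolding underS_def by blast
    have UA: "underS L x \<subseteq> AA" using sub unfolding underS_def by blast
    obtain e1 b1 where e1: "b1 \<in> AA" "\<forall>z\<in>underS L x. e1 z \<in> AA \<and> (x, e1 z) \<in> L \<and> (e1 z, b1) \<in> L \<and> e1 z \<noteq> b1"
      "\<forall>z\<in>underS L x. \<forall>w\<in>underS L x. (z,w) \<in> L \<longrightarrow> (e1 z, e1 w) \<in> L" "inj_on e1 (underS L x)"
      using E[OF xA(1) xA(1)] by blast
    have "\<exists>x'\<in>Fib v. (b1, x') \<in> L \<and> b1 \<noteq> x'"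
    proof (rule ccontr)
      assume "\<not> ?thesis"
      then have "Fib v \<subseteq> {z. (z,b1) \<in> L}" using total[OF e1(1)] refl[OF e1(1)] unfolding Fib_def by blast
      then show False using F1[OF e1(1)] v countable_subset by blast
    qed
    then obtain x' where x': "x' \<in> Fib v" "(b1, x') \<in> L" "b1 \<noteq> x'" by blast
    have x'A: "x' \<in> AA" "x' \<noteq> \<mu>" using x' unfolding Fib_def by auto
    have xb1: "(x, b1) \<in> L" using e1(2) muU trans by blast
    have xx': "(x, x') \<in> L" using xb1 x'(2) trans by blast
    have xnx': "x \<noteq> x'" using xb1 x' antisym by blast
    obtain e2 s where e2: "s \<in> AA" "\<forall>z\<in>underS L x. e2 z \<in> AA \<and> (x', e2 z) \<in> L \<and> (e2 z, s) \<in> L \<and> e2 z \<noteq> s"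
      "\<forall>z\<in>underS L x. \<forall>w\<in>underS L x. (z,w) \<in> L \<longrightarrow> (e2 z, e2 w) \<in> L" "inj_on e2 (underS L x)"
      using E[OF xA(1) x'A(1)] by blast
    obtain e3 b3 where e3: "b3 \<in> AA" "\<forall>z\<in>underS L x. e3 z \<in> AA \<and> (s, e3 z) \<in> L \<and> (e3 z, b3) \<in> L \<and> e3 z \<noteq> b3"
      "\<forall>z\<in>underS L x. \<forall>w\<in>underS L x. (z,w) \<in> L \<longrightarrow> (e3 z, e3 w) \<in> L" "inj_on e3 (underS L x)"
      using E[OF xA(1) e2(1)] by blast
    have x's: "(x', s) \<in> L" using e2(2) muU trans by blast
    define T2 where "T2 u = (if u = [] then Some x' else if u = [True] then Some s else if u = [False] then Some x else None)" for u
    have VS2: "VS T2 2 [c1, c2] = {z \<in> AA. ((x', z) \<in> L) = c1 \<and> ((if c1 then s else x, z) \<in> L) = c2}" for c1 c2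
      by (cases c1) (auto simp: VS_def T2_def numeral_2_eq_2 less_Suc_eq)
    have Vx: "VS (Tx x) 1 [False] \<subseteq> underS L x"
    proof
      fix z assume "z \<in> VS (Tx x) 1 [False]"
      then have z: "z \<in> AA" "(x,z) \<notin> L" using VSx by auto
      then show "z \<in> underS L x" using total[OF z(1) xA(1)] refl[OF z(1)] unfolding underS_def by blast
    qed
    have muV: "\<mu> \<in> VS (Tx x) 1 [False]" using VSx mu muU antisym unfolding underS_def by blast
    have D: "DOM (VS (Tx x) 1 [False]) (VS T2 2 [c1, c2])" for c1 c2
    proof (cases c1)
      case True note c1 = True
      show ?thesis
      proof (cases c2)
        case True
        have "\<forall>z\<in>underS L x. e3 z \<in> VS T2 2 [c1, c2]"
          unfolding VS2 using c1 True e3(2) x's trans by auto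
        then show ?thesis using DOM_I[OF Vx _ e3(3,4)] by blast
      next
        case False
        have "\<forall>z\<in>underS L x. e2 z \<in> VS T2 2 [c1, c2]"
          unfolding VS2 using c1 False e2(2) antisym by auto
        then show ?thesis using DOM_I[OF Vx _ e2(3,4)] by blast
      qed
    next
      case False note c1 = False
      show ?thesis
      proof (cases c2)
        case True
        have "e1 z \<in> VS T2 2 [c1, c2]" if z: "z \<in> underS L x" for z
        proof -
          have a: "(e1 z, b1) \<in> L" "e1 z \<noteq> b1" "e1 z \<in> AA" "(x, e1 z) \<in> L" using e1(2) z by auto
          have "(e1 z, x') \<in> L" using a(1) x'(2) trans by blast
          moreover have "e1 z \<noteq> x'" using a(1,2) x'(2) antisym by blast
          ultimately have "(x', e1 z) \<notin> L" using antisym by blast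
          then show ?thesis unfolding VS2 using c1 True a by auto
        qed
        then show ?thesis using DOM_I[OF Vx _ e1(3,4)] by blast
      next
        case False
        have "id z \<in> VS T2 2 [c1, c2]" if z: "z \<in> underS L x" for z
        proof -
          have a: "(z, x) \<in> L" "z \<noteq> x" "z \<in> AA" using z UA unfolding underS_def by auto
          have "(x, z) \<notin> L" using a antisym by blast
          moreover have "(z, x') \<in> L" using a(1) xx' trans by blast
          moreover have "z \<noteq> x'" using a(1) xx' xnx' antisym by blast
          ultimately have "(x', z) \<notin> L" "(x, z) \<notin> L" using antisym by blast+
          then show ?thesis unfolding VS2 using c1 False a by auto
        qed
        moreover have "\<forall>z\<in>underS L x. \<forall>w\<in>underS L x. (z,w) \<in> L \<longrightarrow> (id z, id w) \<in> L" by simp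
        ultimately show ?thesis using DOM_I[OF Vx, of id] by auto
      qed
    qed
    have Sm: "Sim (Tx x) 1 T2 2" unfolding Sim_def
    proof (intro allI impI)
      fix y2 :: "bool list" assume "length y2 = 2"
      then obtain c1 c2 where "y2 = [c1, c2]" using len2 by blast
      then show "\<exists>y. length y = 1 \<and> DOM (VS (Tx x) 1 y) (VS T2 2 y2)"
        using D[of c1 c2] by (intro exI[of _ "[False]"]) simp
    qed
    have LT2: "LTree AA HH 2 T2" unfolding LTree_iff
    proof (intro conjI allI impI)
      show "dom T2 = {u. length u < 2}"
      proof -
        have "(T2 u \<noteq> None) = (length u < 2)" for u
        proof (cases u)
          case Nil then show ?thesis by (simp add: T2_def)
        next
          case (Cons a r) then show ?thesis by (cases r; cases a) (auto simp: T2_def)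
        qed
        then show ?thesis unfolding dom_def by blast
      qed
      show "ran T2 \<subseteq> AA" using xA x'A e2(1) unfolding ran_def T2_def by (auto split: if_splits)
      fix y :: "bool list" assume "length y = 2"
      then obtain c1 c2 where "y = [c1, c2]" using len2 by blast
      then show "VS T2 2 y \<noteq> {}" using D DOM_ne muV by blast
    qed
    have LTx1: "LTree AA HH 1 (Tx x)" using LTx' xA by blast
    have LTx2: "LTree AA HH 1 (Tx x')" using LTx' x'A by blast
    have le: "(\<rho> (Tx x), \<rho> T2) \<in> W" using rank_mono[OF RF LTx1 LT2 Sm] .
    have restr: "Tx x' = T2 |` {u. length u < 1}"
      by (rule ext) (auto simp: Tx_def T2_def restrict_map_def len1)
    have "LT_prec AA HH T2 (Tx x')" unfolding LT_prec_def using LTx2 LT2 restr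
      by (intro exI[of _ 1]) (simp add: numeral_2_eq_2)
    moreover have "finite_LTree AA HH (Tx x')" using LTx2 unfolding finite_LTree_def by blast
    ultimately have lt: "(\<rho> T2, \<rho> (Tx x')) \<in> W" "\<rho> T2 \<noteq> \<rho> (Tx x')" using RF2 by blast+
    have "\<rho> (Tx x) = \<rho> (Tx x')" using x x' unfolding Fib_def by simp
    then show False using le lt WP(3) by metis
  qed
  have SF: "?S \<subseteq> Field W" unfolding underS_def Field_def by blast
  have fS: "Field (Restr W ?S) = ?S"
  proof
    show "Field (Restr W ?S) \<subseteq> ?S" by (rule Field_Restr_subset)
    show "?S \<subseteq> Field (Restr W ?S)"
    proof
      fix z assume "z \<in> ?S"
      then have "(z,z) \<in> Restr W ?S" using WP(4) SF by blast
      then show "z \<in> Field (Restr W ?S)" unfolding Field_def by blast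
    qed
  qed
  have "Well_order (Restr W ?S)" using Well_order_Restr[OF WO] .
  then have "well_order_on ?S (Restr W ?S)" using fS by simp
  then have c1: "|?S| \<le>o Restr W ?S" by (rule card_of_least)
  have "\<not> |?S| \<le>o natLeq" using unc countable_card_le_natLeq by blast
  then have "natLeq <o |?S|" using not_ordLeq_iff_ordLess[OF natLeq_Well_order card_of_Well_order] by blast
  then have "cardSuc natLeq \<le>o |?S|" using cardSuc_ordLess_ordLeq[OF natLeq_Card_order card_of_Card_order] by blast
  then show ?thesis using c1 ordLeq_transitive by blast
qed

end

theorem mainTheorem19:
  fixes lessdot :: "real rel"
  assumes CH: "(card_of (UNIV :: real set), cardSuc natLeq) \<in> ordIso"
    and wo: "well_order_on {0..1} lessdot"
    and otype: "(lessdot, cardSuc natLeq) \<in> ordIso"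
  shows "let X = {0..1::real}; H = {(\<lambda>x. (x, z) \<in> lessdot) | z. z \<in> {0..1::real}} in
           H \<noteq> {} \<and>
           (has_infinite_LTree X H \<or>
            (\<not> has_infinite_LTree X H \<and>
             (\<forall>(W :: 'o rel) \<rho>. is_rank_function X H W \<rho> \<longrightarrow>
                 (cardSuc natLeq, Restr W (underS W (\<rho> Map.empty))) \<in> ordLeq)))"
proof -
  interpret LDL lessdot using wo otype by unfold_locales
  have ne: "HH \<noteq> {}" by auto
  have ninf: "\<not> has_infinite_LTree AA HH"
  proof
    assume "has_infinite_LTree AA HH"
    then obtain T where T: "range T \<subseteq> AA" "\<forall>y::bool list. \<exists>h\<in>HH. \<forall>k<length y. h (T (take k y)) = y ! k"
      unfolding has_infinite_LTree_def infinite_LTree_def by blast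
    have "\<forall>y::bool list. \<exists>z\<in>AA. \<forall>k<length y. ((T (take k y), z) \<in> lessdot) = y ! k"
    proof
      fix y :: "bool list"
      obtain h where h: "h \<in> HH" "\<forall>k<length y. h (T (take k y)) = y ! k" using T(2) by blast
      then obtain z where "z \<in> AA" "h = (\<lambda>x. (x, z) \<in> lessdot)" by blast
      then show "\<exists>z\<in>AA. \<forall>k<length y. ((T (take k y), z) \<in> lessdot) = y ! k" using h(2) by blast
    qed
    then show False using no_inf T(1) by blast
  qed
  have "\<forall>(W :: 'o rel) \<rho>. is_rank_function AA HH W \<rho> \<longrightarrow>
                 (cardSuc natLeq, Restr W (underS W (\<rho> Map.empty))) \<in> ordLeq"
    using big by blast
  then show ?thesis unfolding Let_def using ne ninf by blast
qed

end
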